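(* Let $X$ be a $T_1$ topological space and $f,g\in T''(X)$. If $f\in M(g)$, then $Z(g)\subseteq Z(f)$.
   Context: $C(X)$ is the ring of real-valued continuous functions on $X$; a cozero set is a set $\{x: h(x)\neq 0\}$ with $h\in C(X)$. $T''(X)$ is the ring (under pointwise operations) of all functions $f\colon X\to\mathbb{R}$ for which there is a dense cozero set $U$ of $X$ with $f|_U$ continuous. $Z(f)=\{x\in X: f(x)=0\}$. $M(g)$ denotes the intersection of all maximal ideals of $T''(X)$ containing $g$. *)

theory Defs
  imports "HOL-Analysis.Analysis" "HOL-Algebra.Ideal"
begin

text \<open>Functions X \<rightarrow> R are represented as real-valued functions that vanish
  outside the topspace (extensional), so that ring elements are determined by
  their values on X.\<close>

definition cozero_set :: "'a topology \<Rightarrow> 'a set \<Rightarrow> bool" where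
  "cozero_set X U \<longleftrightarrow>
     (\<exists>h. continuous_map X euclideanreal h \<and> U = {x \<in> topspace X. h x \<noteq> 0})"

definition T2 :: "'a topology \<Rightarrow> ('a \<Rightarrow> real) set" where
  "T2 X = {f. (\<forall>x. x \<notin> topspace X \<longrightarrow> f x = 0) \<and>
             (\<exists>U. cozero_set X U \<and> X closure_of U = topspace X \<and>
                  continuous_map (subtopology X U) euclideanreal f)}"

definition T2_ring :: "'a topology \<Rightarrow> ('a \<Rightarrow> real) ring" where
  "T2_ring X = \<lparr> carrier = T2 X,
                 mult = (\<lambda>f g x. f x * g x),
                 one = (\<lambda>x. if x \<in> topspace X then 1 else 0),
                 zero = (\<lambda>x. 0),
                 add = (\<lambda>f g x. f x + g x) \<rparr>"

definition zero_set :: "'a topology \<Rightarrow> ('a \<Rightarrow> real) \<Rightarrow> 'a set" where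
  "zero_set X f = {x \<in> topspace X. f x = 0}"

definition M_int :: "'a topology \<Rightarrow> ('a \<Rightarrow> real) \<Rightarrow> ('a \<Rightarrow> real) set" where
  "M_int X g = T2 X \<inter> \<Inter> {M. maximalideal M (T2_ring X) \<and> g \<in> M}"

end

theory Submission
  imports Defs
begin

lemma cozero_open: "cozero_set X U \<Longrightarrow> openin X U"
proof -
  assume "cozero_set X U"
  then obtain h where h: "continuous_map X euclideanreal h" "U = {x \<in> topspace X. h x \<noteq> 0}"
    unfolding cozero_set_def by blast
  have "openin X {x \<in> topspace X. h x \<in> -{0}}"
    by (rule openin_continuous_map_preimage[OF h(1)]) auto
  then show ?thesis using h(2) by simp
qed

lemma T2_common:
  assumes "f \<in> T2 X" "g \<in> T2 X"
  shows "\<exists>W. cozero_set X W \<and> X closure_of W = topspace X \<and>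
     continuous_map (subtopology X W) euclideanreal f \<and>
     continuous_map (subtopology X W) euclideanreal g"
proof -
  obtain U where U: "cozero_set X U" "X closure_of U = topspace X"
     "continuous_map (subtopology X U) euclideanreal f"
    using assms(1) unfolding T2_def by blast
  obtain V where V: "cozero_set X V" "X closure_of V = topspace X"
     "continuous_map (subtopology X V) euclideanreal g"
    using assms(2) unfolding T2_def by blast
  obtain h1 where h1: "continuous_map X euclideanreal h1" "U = {x \<in> topspace X. h1 x \<noteq> 0}"
    using U(1) unfolding cozero_set_def by blast
  obtain h2 where h2: "continuous_map X euclideanreal h2" "V = {x \<in> topspace X. h2 x \<noteq> 0}"
    using V(1) unfolding cozero_set_def by blast
  have c: "cozero_set X (U \<inter> V)"
    unfolding cozero_set_def
    by (rule exI[of _ "\<lambda>x. h1 x * h2 x"]) (auto simp: h1 h2 continuous_map_real_mult)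
  have oU: "openin X U" using U(1) cozero_open by blast
  have "X closure_of (U \<inter> V) = X closure_of (U \<inter> X closure_of V)"
    using closure_of_openin_Int_closure_of[OF oU] by simp
  also have "\<dots> = X closure_of U" using V(2) openin_subset[OF oU]
    by (simp add: Int_absorb2)
  finally have d: "X closure_of (U \<inter> V) = topspace X" using U(2) by simp
  show ?thesis
    using c d continuous_map_from_subtopology_mono[OF U(3), of "U \<inter> V"]
      continuous_map_from_subtopology_mono[OF V(3), of "U \<inter> V"] by blast
qed

lemma T2_add: "f \<in> T2 X \<Longrightarrow> g \<in> T2 X \<Longrightarrow> (\<lambda>x. f x + g x) \<in> T2 X"
proof -
  assume a: "f \<in> T2 X" "g \<in> T2 X"
  then obtain W where W: "cozero_set X W" "X closure_of W = topspace X"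
     "continuous_map (subtopology X W) euclideanreal f"
     "continuous_map (subtopology X W) euclideanreal g" using T2_common by blast
  have "continuous_map (subtopology X W) euclideanreal (\<lambda>x. f x + g x)"
    using W(3,4) by (rule continuous_map_add)
  then show ?thesis using a W unfolding T2_def by auto
qed

lemma T2_mult: "f \<in> T2 X \<Longrightarrow> g \<in> T2 X \<Longrightarrow> (\<lambda>x. f x * g x) \<in> T2 X"
proof -
  assume a: "f \<in> T2 X" "g \<in> T2 X"
  then obtain W where W: "cozero_set X W" "X closure_of W = topspace X"
     "continuous_map (subtopology X W) euclideanreal f"
     "continuous_map (subtopology X W) euclideanreal g" using T2_common by blast
  have "continuous_map (subtopology X W) euclideanreal (\<lambda>x. f x * g x)"
    using W(3,4) by (rule continuous_map_real_mult)
  then show ?thesis using a W unfolding T2_def by auto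
qed

lemma T2_neg: "f \<in> T2 X \<Longrightarrow> (\<lambda>x. - f x) \<in> T2 X"
proof -
  assume a: "f \<in> T2 X"
  then obtain W where W: "cozero_set X W" "X closure_of W = topspace X"
     "continuous_map (subtopology X W) euclideanreal f" unfolding T2_def by blast
  have "continuous_map (subtopology X W) euclideanreal (\<lambda>x. - f x)"
    using W(3) by (rule continuous_map_minus)
  then show ?thesis using a W unfolding T2_def by auto
qed

lemma T2_const: "(\<lambda>x. if x \<in> topspace X then c else 0) \<in> T2 X"
proof -
  have cz: "cozero_set X (topspace X)"
    unfolding cozero_set_def by (rule exI[of _ "\<lambda>x. 1"]) auto
  have "continuous_map (subtopology X (topspace X)) euclideanreal (\<lambda>x. if x \<in> topspace X then c else 0)"
    by (rule continuous_map_eq[of _ _ "\<lambda>x. c"]) auto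
  then show ?thesis using cz unfolding T2_def by (auto intro!: exI[of _ "topspace X"])
qed

lemma T2_ring_is_ring: "ring (T2_ring X)"
proof (rule ringI)
  show "abelian_group (T2_ring X)"
  proof (rule abelian_groupI)
    fix x assume "x \<in> carrier (T2_ring X)"
    then show "\<exists>y\<in>carrier (T2_ring X). y \<oplus>\<^bsub>T2_ring X\<^esub> x = \<zero>\<^bsub>T2_ring X\<^esub>"
      by (auto simp: T2_ring_def intro!: bexI[of _ "\<lambda>y. - x y"] T2_neg)
  next
    show "\<zero>\<^bsub>T2_ring X\<^esub> \<in> carrier (T2_ring X)"
      using T2_const[of X 0] by (simp add: T2_ring_def)
  qed (auto simp: T2_ring_def T2_add algebra_simps)
next
  show "monoid (T2_ring X)"
  proof (rule monoidI)
    show "\<one>\<^bsub>T2_ring X\<^esub> \<in> carrier (T2_ring X)"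
      using T2_const[of X 1] by (simp add: T2_ring_def)
  next
    fix x assume "x \<in> carrier (T2_ring X)"
    then show "\<one>\<^bsub>T2_ring X\<^esub> \<otimes>\<^bsub>T2_ring X\<^esub> x = x" "x \<otimes>\<^bsub>T2_ring X\<^esub> \<one>\<^bsub>T2_ring X\<^esub> = x"
      by (auto simp: T2_ring_def T2_def)
  qed (auto simp: T2_ring_def T2_mult)
qed (auto simp: T2_ring_def algebra_simps)

lemma T2_ring_inv:
  assumes "f \<in> T2 X" shows "a_inv (T2_ring X) f = (\<lambda>x. - f x)"
proof -
  interpret ring "T2_ring X" by (rule T2_ring_is_ring)
  show ?thesis
    by (rule add.inv_equality) (auto simp: T2_ring_def assms T2_neg)
qed

lemma point_ideal_max:
  assumes "x \<in> topspace X"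
  shows "maximalideal {h \<in> T2 X. h x = 0} (T2_ring X)"
proof -
  interpret R: ring "T2_ring X" by (rule T2_ring_is_ring)
  let ?I = "{h \<in> T2 X. h x = 0}"
  have idl: "ideal ?I (T2_ring X)"
  proof (rule idealI)
    show "ring (T2_ring X)" by (rule T2_ring_is_ring)
    show "subgroup ?I (add_monoid (T2_ring X))"
    proof (rule R.add.subgroupI)
      show "?I \<noteq> {}" using T2_const[of X 0] by auto
    next
      fix a assume "a \<in> ?I"
      then have aT: "a \<in> T2 X" "a x = 0" by auto
      have e: "a_inv (T2_ring X) a = (\<lambda>x. - a x)"
        using T2_ring_inv[OF aT(1)] .
      show "a_inv (T2_ring X) a \<in> ?I"
        unfolding e using T2_neg[OF aT(1)] aT(2) by simp
    qed (auto simp: T2_ring_def T2_add)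
  qed (auto simp: T2_ring_def T2_mult)
  show ?thesis
  proof (rule maximalidealI[OF idl])
    show "carrier (T2_ring X) \<noteq> ?I"
    proof
      assume "carrier (T2_ring X) = ?I"
      then have "(\<lambda>y. if y \<in> topspace X then (1::real) else 0) \<in> ?I"
        using T2_const[of X 1] by (simp add: T2_ring_def)
      then show False using assms by simp
    qed
  next
    fix J assume J: "ideal J (T2_ring X)" "?I \<subseteq> J" "J \<subseteq> carrier (T2_ring X)"
    interpret J: ideal J "T2_ring X" by (rule J(1))
    show "J = ?I \<or> J = carrier (T2_ring X)"
    proof (cases "J = ?I")
      case False
      then obtain h where h: "h \<in> J" "h x \<noteq> 0" using J(2,3) by (auto simp: T2_ring_def)
      have hT: "h \<in> T2 X" using h J(3) by (auto simp: T2_ring_def)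
      define c where "c = (\<lambda>y. if y \<in> topspace X then 1 / h x else 0)"
      define o1 where "o1 = (\<lambda>y. if y \<in> topspace X then (1::real) else 0)"
      have cT: "c \<in> T2 X" unfolding c_def by (rule T2_const)
      have o1T: "o1 \<in> T2 X" unfolding o1_def by (rule T2_const)
      have chJ: "(\<lambda>y. c y * h y) \<in> J"
        using J.I_l_closed[OF h(1), of c] cT by (simp add: T2_ring_def)
      have chT: "(\<lambda>y. c y * h y) \<in> T2 X" using T2_mult[OF cT hT] .
      define k where "k = (\<lambda>y. o1 y + - (c y * h y))"
      have kT: "k \<in> T2 X" unfolding k_def by (intro T2_add o1T T2_neg chT)
      have "k x = 0" using assms h(2) by (simp add: k_def o1_def c_def)
      then have kJ: "k \<in> J" using kT J(2) by auto
      have "k \<oplus>\<^bsub>T2_ring X\<^esub> (\<lambda>y. c y * h y) \<in> J" using J.a_closed[OF kJ chJ] .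
      moreover have "k \<oplus>\<^bsub>T2_ring X\<^esub> (\<lambda>y. c y * h y) = \<one>\<^bsub>T2_ring X\<^esub>"
        by (auto simp: T2_ring_def k_def o1_def)
      ultimately have "\<one>\<^bsub>T2_ring X\<^esub> \<in> J" by simp
      then show ?thesis using J.one_imp_carrier by blast
    qed simp
  qed
qed

theorem lemma5p0:
  fixes X :: "'a topology" and f g :: "'a \<Rightarrow> real"
  assumes "t1_space X"
    and "f \<in> T2 X" and "g \<in> T2 X"
    and "f \<in> M_int X g"
  shows "zero_set X g \<subseteq> zero_set X f"
proof
  fix x assume "x \<in> zero_set X g"
  then have x: "x \<in> topspace X" "g x = 0" by (auto simp: zero_set_def)
  have "maximalideal {h \<in> T2 X. h x = 0} (T2_ring X) \<and> g \<in> {h \<in> T2 X. h x = 0}"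
    using point_ideal_max[OF x(1)] x(2) assms(3) by simp
  then have "f \<in> {h \<in> T2 X. h x = 0}" using assms(4) unfolding M_int_def by blast
  then show "x \<in> zero_set X f" using x(1) by (simp add: zero_set_def)
qed

end
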